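(* Let $f:X\to Y$ be a continuous surjection between compact Hausdorff spaces. Then the map $OH(f):OH(X)\to OH(Y)$ is open if and only if $f$ is open.
   Context: All spaces are compact Hausdorff and all maps continuous. For a compactum $X$, $C(X)$ is the Banach space of continuous real functions on $X$ with the sup-norm, and $c_X$ denotes the constant function with value $c\in\mathbb{R}$. Let $V(X)=\prod_{\varphi\in C(X)}[\min\varphi,\max\varphi]$ with the product topology (elements are functionals $\nu:C(X)\to\mathbb{R}$). A functional $\nu:C(X)\to\mathbb{R}$ is: normed if $\nu(1_X)=1$; weakly additive if $\nu(\varphi+c_X)=\nu(\varphi)+c$ for all $\varphi\in C(X)$, $c\in\mathbb{R}$; order-preserving if $\varphi\le\psi$ implies $\nu(\varphi)\le\nu(\psi)$; positively homogeneous if $\nu(t\varphi)=t\nu(\varphi)$ for all $t\ge 0$. $OH(X)\subset V(X)$ is the subspace of all functionals that are normed, weakly additive, order-preserving and positively homogeneous. For a map $f:X\to Y$, $OH(f):OH(X)\to OH(Y)$ is given by $OH(f)(\nu)(\varphi)=\nu(\varphi\circ f)$ for $\varphi\in C(Y)$. *)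

theory Defs
  imports "HOL-Analysis.Analysis"
begin

text \<open>Functions on the compactum X are represented as real functions on the carrier type that
vanish outside topspace X, so that each element of C(X) has a unique representative.\<close>

definition extX :: "'a topology \<Rightarrow> ('a \<Rightarrow> real) \<Rightarrow> ('a \<Rightarrow> real)" where
  "extX X g = (\<lambda>x. if x \<in> topspace X then g x else 0)"

definition CX :: "'a topology \<Rightarrow> ('a \<Rightarrow> real) set" where
  "CX X = {\<phi>. continuous_map X euclideanreal \<phi> \<and> (\<forall>x. x \<notin> topspace X \<longrightarrow> \<phi> x = 0)}"

definition VX :: "'a topology \<Rightarrow> (('a \<Rightarrow> real) \<Rightarrow> real) set" where
  "VX X = (\<Pi>\<^sub>E \<phi>\<in>CX X. {Inf (\<phi> ` topspace X) .. Sup (\<phi> ` topspace X)})"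

definition OH :: "'a topology \<Rightarrow> (('a \<Rightarrow> real) \<Rightarrow> real) set" where
  "OH X = {\<nu> \<in> VX X.
      \<nu> (extX X (\<lambda>_. 1)) = 1
    \<and> (\<forall>\<phi>\<in>CX X. \<forall>c::real. \<nu> (extX X (\<lambda>x. \<phi> x + c)) = \<nu> \<phi> + c)
    \<and> (\<forall>\<phi>\<in>CX X. \<forall>\<psi>\<in>CX X. (\<forall>x\<in>topspace X. \<phi> x \<le> \<psi> x) \<longrightarrow> \<nu> \<phi> \<le> \<nu> \<psi>)
    \<and> (\<forall>\<phi>\<in>CX X. \<forall>t::real. t \<ge> 0 \<longrightarrow> \<nu> (\<lambda>x. t * \<phi> x) = t * \<nu> \<phi>)}"

definition OHtop :: "'a topology \<Rightarrow> (('a \<Rightarrow> real) \<Rightarrow> real) topology" where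
  "OHtop X = subtopology (product_topology (\<lambda>_. euclideanreal) (CX X)) (OH X)"

definition OHmap :: "'a topology \<Rightarrow> 'b topology \<Rightarrow> ('a \<Rightarrow> 'b)
    \<Rightarrow> (('a \<Rightarrow> real) \<Rightarrow> real) \<Rightarrow> (('b \<Rightarrow> real) \<Rightarrow> real)" where
  "OHmap X Y f \<nu> = (\<lambda>\<phi>\<in>CX Y. \<nu> (extX X (\<lambda>x. \<phi> (f x))))"

end

theory Submission
  imports Defs
begin

lemma extX_cong: "(\<And>x. x \<in> topspace X \<Longrightarrow> g x = h x) \<Longrightarrow> extX X g = extX X h"
  by (auto simp: extX_def)

lemma extX_in: "x \<in> topspace X \<Longrightarrow> extX X g x = g x"
  by (simp add: extX_def)

lemma CX_extX: "continuous_map X euclideanreal g \<Longrightarrow> extX X g \<in> CX X"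
  unfolding CX_def extX_def
  by (auto intro: continuous_map_eq)

lemma CX_cont: "\<phi> \<in> CX X \<Longrightarrow> continuous_map X euclideanreal \<phi>"
  by (simp add: CX_def)

lemma CX_out: "\<phi> \<in> CX X \<Longrightarrow> x \<notin> topspace X \<Longrightarrow> \<phi> x = 0"
  by (simp add: CX_def)

lemma CX_extX_self: "\<phi> \<in> CX X \<Longrightarrow> extX X \<phi> = \<phi>"
  by (auto simp: CX_def extX_def)

lemma CX_minus: "\<phi> \<in> CX X \<Longrightarrow> (\<lambda>x. - \<phi> x) \<in> CX X"
  by (auto simp: CX_def intro: continuous_intros)

lemma CX_mult: "\<phi> \<in> CX X \<Longrightarrow> (\<lambda>x. t * \<phi> x) \<in> CX X"
  by (auto simp: CX_def intro: continuous_intros)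

lemma CX_zero: "(\<lambda>_. 0) \<in> CX X"
  by (auto simp: CX_def)

lemma CX_shift: "\<phi> \<in> CX X \<Longrightarrow> extX X (\<lambda>x. \<phi> x + c) \<in> CX X"
  by (rule CX_extX) (auto simp: CX_def intro!: continuous_intros)

lemma compact_image_real:
  assumes "compact_space X" "continuous_map X euclideanreal \<phi>" "closedin X S"
  shows "compact (\<phi> ` S)"
proof -
  have "compactin X S" using assms closedin_compact_space by blast
  then have "compactin euclideanreal (\<phi> ` S)" using assms image_compactin by blast
  then show ?thesis by simp
qed

lemma OH_props:
  assumes "\<nu> \<in> OH X"
  shows "\<nu> (extX X (\<lambda>_. 1)) = 1"
    "\<And>\<phi> c. \<phi> \<in> CX X \<Longrightarrow> \<nu> (extX X (\<lambda>x. \<phi> x + c)) = \<nu> \<phi> + c"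
    "\<And>\<phi> \<psi>. \<phi> \<in> CX X \<Longrightarrow> \<psi> \<in> CX X \<Longrightarrow> (\<forall>x\<in>topspace X. \<phi> x \<le> \<psi> x) \<Longrightarrow> \<nu> \<phi> \<le> \<nu> \<psi>"
    "\<And>\<phi> t. \<phi> \<in> CX X \<Longrightarrow> t \<ge> 0 \<Longrightarrow> \<nu> (\<lambda>x. t * \<phi> x) = t * \<nu> \<phi>"
    "\<nu> \<in> extensional (CX X)"
  using assms unfolding OH_def VX_def by (auto simp: PiE_def)

lemma OH_const:
  assumes "\<nu> \<in> OH X"
  shows "\<nu> (extX X (\<lambda>_. c)) = c"
proof -
  have "\<nu> (\<lambda>x. 0 * 0) = 0 * \<nu> (\<lambda>_. 0)" using OH_props(4)[OF assms CX_zero, of 0] by simp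
  then have z: "\<nu> (\<lambda>_. 0) = 0" by simp
  have "\<nu> (extX X (\<lambda>x. 0 + c)) = \<nu> (\<lambda>_. 0) + c" using OH_props(2)[OF assms CX_zero] by simp
  then show ?thesis using z by simp
qed

lemma OH_intro:
  assumes cX: "compact_space X"
    and ext: "\<nu> \<in> extensional (CX X)"
    and n: "\<nu> (extX X (\<lambda>_. 1)) = 1"
    and a: "\<And>\<phi> c. \<phi> \<in> CX X \<Longrightarrow> \<nu> (extX X (\<lambda>x. \<phi> x + c)) = \<nu> \<phi> + c"
    and m: "\<And>\<phi> \<psi>. \<phi> \<in> CX X \<Longrightarrow> \<psi> \<in> CX X \<Longrightarrow> (\<forall>x\<in>topspace X. \<phi> x \<le> \<psi> x) \<Longrightarrow> \<nu> \<phi> \<le> \<nu> \<psi>"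
    and h: "\<And>\<phi> t. \<phi> \<in> CX X \<Longrightarrow> t \<ge> 0 \<Longrightarrow> \<nu> (\<lambda>x. t * \<phi> x) = t * \<nu> \<phi>"
  shows "\<nu> \<in> OH X"
proof -
  have "\<nu> (\<lambda>x. 0 * 0) = 0 * \<nu> (\<lambda>_. 0)" using h[OF CX_zero, of 0] by simp
  then have z: "\<nu> (\<lambda>_. 0) = 0" by simp
  have cst: "\<nu> (extX X (\<lambda>_. c)) = c" for c
    using a[OF CX_zero, of c] z by simp
  have ne: "topspace X \<noteq> {}"
  proof
    assume "topspace X = {}"
    then have "extX X (\<lambda>_. 1) = (\<lambda>_. 0)" by (auto simp: extX_def)
    then show False using n z by simp
  qed
  have range: "\<nu> \<phi> \<in> {Inf (\<phi> ` topspace X) .. Sup (\<phi> ` topspace X)}" if \<phi>: "\<phi> \<in> CX X" for \<phi>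
  proof -
    have "compact (\<phi> ` topspace X)"
      using compact_image_real[OF cX CX_cont[OF \<phi>]] by simp
    then have b: "bounded (\<phi> ` topspace X)" by (rule compact_imp_bounded)
    have c1: "extX X (\<lambda>_. Inf (\<phi> ` topspace X)) \<in> CX X" "extX X (\<lambda>_. Sup (\<phi> ` topspace X)) \<in> CX X"
      by (auto intro!: CX_extX)
    have "\<nu> (extX X (\<lambda>_. Inf (\<phi> ` topspace X))) \<le> \<nu> \<phi>"
      using b by (intro m[OF c1(1) \<phi>]) (auto simp: extX_def intro!: cInf_lower bounded_imp_bdd_below)
    moreover have "\<nu> \<phi> \<le> \<nu> (extX X (\<lambda>_. Sup (\<phi> ` topspace X)))"
      using b by (intro m[OF \<phi> c1(2)]) (auto simp: extX_def intro!: cSup_upper bounded_imp_bdd_above)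
    ultimately show ?thesis by (simp add: cst)
  qed
  have "\<nu> \<in> VX X" unfolding VX_def using ext range by (auto simp: PiE_def)
  then show ?thesis unfolding OH_def using n a m h by auto
qed

lemma OH_sub: "OH X \<subseteq> (\<Pi>\<^sub>E \<phi>\<in>CX X. UNIV)"
  unfolding OH_def VX_def by (auto simp: PiE_def)

lemma topspace_OHtop [simp]: "topspace (OHtop X) = OH X"
  unfolding OHtop_def using OH_sub by auto

lemma proj_cont: "\<psi> \<in> CX X \<Longrightarrow> continuous_map (OHtop X) euclideanreal (\<lambda>\<nu>. \<nu> \<psi>)"
  unfolding OHtop_def
  by (intro continuous_map_from_subtopology) (rule continuous_map_product_projection)

definition fmax :: "'a topology \<Rightarrow> 'b topology \<Rightarrow> ('a \<Rightarrow> 'b) \<Rightarrow> ('a \<Rightarrow> real) \<Rightarrow> 'b \<Rightarrow> real" where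
  "fmax X Y f \<phi> y = (if y \<in> topspace Y then Sup (\<phi> ` {x \<in> topspace X. f x = y}) else 0)"

definition fmin :: "'a topology \<Rightarrow> 'b topology \<Rightarrow> ('a \<Rightarrow> 'b) \<Rightarrow> ('a \<Rightarrow> real) \<Rightarrow> 'b \<Rightarrow> real" where
  "fmin X Y f \<phi> = (\<lambda>y. - fmax X Y f (\<lambda>x. - \<phi> x) y)"

lemma fmax_eqI:
  assumes "y \<in> topspace Y" "x0 \<in> topspace X" "f x0 = y" "\<phi> x0 = v"
    "\<And>x. x \<in> topspace X \<Longrightarrow> f x = y \<Longrightarrow> \<phi> x \<le> v"
  shows "fmax X Y f \<phi> y = v"
  unfolding fmax_def using assms by (auto intro!: cSup_eq_maximum)

definition sec :: "'a topology \<Rightarrow> 'b topology \<Rightarrow> ('a \<Rightarrow> 'b) \<Rightarrow> (('a \<Rightarrow> real) \<Rightarrow> real)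
    \<Rightarrow> (('b \<Rightarrow> real) \<Rightarrow> real) \<Rightarrow> (('a \<Rightarrow> real) \<Rightarrow> real)" where
  "sec X Y f \<nu>0 \<mu> = (\<lambda>\<phi>\<in>CX X. max (min (\<nu>0 \<phi>) (\<mu> (fmax X Y f \<phi>))) (\<mu> (fmin X Y f \<phi>)))"

definition dirac :: "'a topology \<Rightarrow> 'a \<Rightarrow> (('a \<Rightarrow> real) \<Rightarrow> real)" where
  "dirac X x = (\<lambda>\<phi>\<in>CX X. \<phi> x)"

lemma dirac_OH:
  assumes "compact_space X" "x \<in> topspace X"
  shows "dirac X x \<in> OH X"
proof -
  have "extX X (\<lambda>_. 1) \<in> CX X" by (rule CX_extX) simp
  then show ?thesis
    using assms CX_shift by (intro OH_intro) (auto simp: dirac_def extX_in CX_mult)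
qed

lemma dirac_cont:
  assumes "compact_space Y"
  shows "continuous_map Y (OHtop Y) (dirac Y)"
proof -
  have "continuous_map Y (product_topology (\<lambda>_. euclideanreal) (CX Y)) (dirac Y)"
  proof (subst continuous_map_componentwise, intro conjI ballI)
    show "dirac Y ` topspace Y \<subseteq> extensional (CX Y)" by (auto simp: dirac_def)
    fix k assume k: "k \<in> CX Y"
    then show "continuous_map Y euclideanreal (\<lambda>y. dirac Y y k)"
      by (simp add: dirac_def CX_cont)
  qed
  moreover have "dirac Y \<in> topspace Y \<rightarrow> OH Y"
    using dirac_OH[OF assms] by auto
  ultimately show ?thesis unfolding OHtop_def
    by (simp add: continuous_map_in_subtopology)
qed

context
  fixes X :: "'a topology" and Y :: "'b topology" and f :: "'a \<Rightarrow> 'b"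
  assumes cX: "compact_space X" and hY: "Hausdorff_space Y"
    and cf: "continuous_map X Y f" and sf: "f ` topspace X = topspace Y"
begin

lemma fmax_attain:
  assumes \<phi>: "continuous_map X euclideanreal \<phi>" and y: "y \<in> topspace Y"
  shows "\<exists>x0\<in>topspace X. f x0 = y \<and> \<phi> x0 = fmax X Y f \<phi> y"
    "\<And>x. x \<in> topspace X \<Longrightarrow> f x = y \<Longrightarrow> \<phi> x \<le> fmax X Y f \<phi> y"
proof -
  let ?F = "{x \<in> topspace X. f x = y}"
  have "closedin Y {y}" using hY y by (simp add: Hausdorff_imp_t1_space closedin_t1_singleton)
  then have "closedin X {x \<in> topspace X. f x \<in> {y}}" by (rule closedin_continuous_map_preimage[OF cf])
  then have cl: "closedin X ?F" by simp
  have "compact (\<phi> ` ?F)" by (rule compact_image_real[OF cX \<phi> cl])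
  moreover have "y \<in> f ` topspace X" using sf y by simp
  then have "\<phi> ` ?F \<noteq> {}" by auto
  ultimately obtain s where s: "s \<in> \<phi> ` ?F" "\<forall>t\<in>\<phi> ` ?F. t \<le> s"
    using compact_attains_sup by blast
  then obtain x0 where x0: "x0 \<in> ?F" "\<phi> x0 = s" by auto
  have eq: "fmax X Y f \<phi> y = s"
    using s x0 y by (intro fmax_eqI[of _ _ x0]) auto
  show "\<exists>x0\<in>topspace X. f x0 = y \<and> \<phi> x0 = fmax X Y f \<phi> y" using x0 eq by auto
  show "\<And>x. x \<in> topspace X \<Longrightarrow> f x = y \<Longrightarrow> \<phi> x \<le> fmax X Y f \<phi> y"
    using s eq by auto
qed

lemma fmax_ge: "continuous_map X euclideanreal \<phi> \<Longrightarrow> x \<in> topspace X \<Longrightarrow> \<phi> x \<le> fmax X Y f \<phi> (f x)"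
proof -
  assume a: "continuous_map X euclideanreal \<phi>" "x \<in> topspace X"
  then have "f x \<in> topspace Y" using sf by blast
  then show ?thesis using fmax_attain(2)[OF a(1)] a(2) by blast
qed

lemma fmax_CX:
  assumes om: "open_map X Y f" and \<phi>: "continuous_map X euclideanreal \<phi>"
  shows "fmax X Y f \<phi> \<in> CX Y"
proof -
  let ?g = "fmax X Y f \<phi>"
  have gt: "{y \<in> topspace Y. ?g y > a} = f ` {x \<in> topspace X. \<phi> x > a}" for a
  proof
    show "{y \<in> topspace Y. ?g y > a} \<subseteq> f ` {x \<in> topspace X. \<phi> x > a}"
    proof
      fix y assume "y \<in> {y \<in> topspace Y. ?g y > a}"
      then have y: "y \<in> topspace Y" "?g y > a" by auto
      then obtain x0 where "x0 \<in> topspace X" "f x0 = y" "\<phi> x0 = ?g y"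
        using fmax_attain(1)[OF \<phi>, of y] by blast
      then show "y \<in> f ` {x \<in> topspace X. \<phi> x > a}" using y by auto
    qed
    show "f ` {x \<in> topspace X. \<phi> x > a} \<subseteq> {y \<in> topspace Y. ?g y > a}"
    proof
      fix y assume "y \<in> f ` {x \<in> topspace X. \<phi> x > a}"
      then obtain x where x: "x \<in> topspace X" "\<phi> x > a" "y = f x" by auto
      then have "f x \<in> topspace Y" using sf by blast
      then show "y \<in> {y \<in> topspace Y. ?g y > a}" using fmax_ge[OF \<phi> x(1)] x by auto
    qed
  qed
  have ge: "{y \<in> topspace Y. ?g y \<ge> a} = f ` {x \<in> topspace X. \<phi> x \<ge> a}" for a
  proof
    show "{y \<in> topspace Y. ?g y \<ge> a} \<subseteq> f ` {x \<in> topspace X. \<phi> x \<ge> a}"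
    proof
      fix y assume "y \<in> {y \<in> topspace Y. ?g y \<ge> a}"
      then have y: "y \<in> topspace Y" "?g y \<ge> a" by auto
      then obtain x0 where "x0 \<in> topspace X" "f x0 = y" "\<phi> x0 = ?g y"
        using fmax_attain(1)[OF \<phi>, of y] by blast
      then show "y \<in> f ` {x \<in> topspace X. \<phi> x \<ge> a}" using y by auto
    qed
    show "f ` {x \<in> topspace X. \<phi> x \<ge> a} \<subseteq> {y \<in> topspace Y. ?g y \<ge> a}"
    proof
      fix y assume "y \<in> f ` {x \<in> topspace X. \<phi> x \<ge> a}"
      then obtain x where x: "x \<in> topspace X" "\<phi> x \<ge> a" "y = f x" by auto
      then have "f x \<in> topspace Y" using sf by blast
      then show "y \<in> {y \<in> topspace Y. ?g y \<ge> a}" using fmax_ge[OF \<phi> x(1)] x by auto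
    qed
  qed
  have o1: "openin Y {y \<in> topspace Y. ?g y > a}" for a
  proof -
    have "openin X {x \<in> topspace X. \<phi> x > a}"
      using \<phi> continuous_map_upper_lower_semicontinuous_lt by blast
    then show ?thesis using om gt unfolding open_map_def by metis
  qed
  have o2: "openin Y {y \<in> topspace Y. ?g y < a}" for a
  proof -
    have "closedin X {x \<in> topspace X. \<phi> x \<ge> a}"
      using \<phi> continuous_map_upper_lower_semicontinuous_le by blast
    then have "compactin X {x \<in> topspace X. \<phi> x \<ge> a}" using cX closedin_compact_space by blast
    then have "compactin Y (f ` {x \<in> topspace X. \<phi> x \<ge> a})" using cf image_compactin by blast
    then have "closedin Y {y \<in> topspace Y. ?g y \<ge> a}" using ge hY compactin_imp_closedin by metis
    then have "openin Y (topspace Y - {y \<in> topspace Y. ?g y \<ge> a})" by blast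
    moreover have "topspace Y - {y \<in> topspace Y. ?g y \<ge> a} = {y \<in> topspace Y. ?g y < a}" by auto
    ultimately show ?thesis by simp
  qed
  have "continuous_map Y euclideanreal ?g"
    using o1 o2 continuous_map_upper_lower_semicontinuous_lt by blast
  then show ?thesis unfolding CX_def by (auto simp: fmax_def)
qed

lemma fmax_mono:
  assumes "continuous_map X euclideanreal \<phi>" "continuous_map X euclideanreal \<phi>'"
    "\<forall>x\<in>topspace X. \<phi> x \<le> \<phi>' x" "y \<in> topspace Y"
  shows "fmax X Y f \<phi> y \<le> fmax X Y f \<phi>' y"
proof -
  obtain x0 where "x0 \<in> topspace X" "f x0 = y" "\<phi> x0 = fmax X Y f \<phi> y"
    using fmax_attain(1)[OF assms(1,4)] by blast
  then show ?thesis using fmax_attain(2)[OF assms(2,4), of x0] assms(3) by force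
qed

lemma fmax_shift:
  assumes \<phi>: "\<phi> \<in> CX X"
  shows "fmax X Y f (extX X (\<lambda>x. \<phi> x + c)) = extX Y (\<lambda>y. fmax X Y f \<phi> y + c)"
proof
  fix y
  show "fmax X Y f (extX X (\<lambda>x. \<phi> x + c)) y = extX Y (\<lambda>y. fmax X Y f \<phi> y + c) y"
  proof (cases "y \<in> topspace Y")
    case True
    obtain x0 where x0: "x0 \<in> topspace X" "f x0 = y" "\<phi> x0 = fmax X Y f \<phi> y"
      using fmax_attain(1)[OF CX_cont[OF \<phi>] True] by blast
    show ?thesis using True x0 fmax_attain(2)[OF CX_cont[OF \<phi>] True]
      by (subst fmax_eqI[of _ _ x0]) (auto simp: extX_def)
  qed (simp add: fmax_def extX_def)
qed

lemma fmax_homog: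
  assumes \<phi>: "\<phi> \<in> CX X" and t: "t \<ge> 0"
  shows "fmax X Y f (\<lambda>x. t * \<phi> x) = (\<lambda>y. t * fmax X Y f \<phi> y)"
proof
  fix y
  show "fmax X Y f (\<lambda>x. t * \<phi> x) y = t * fmax X Y f \<phi> y"
  proof (cases "y \<in> topspace Y")
    case True
    obtain x0 where x0: "x0 \<in> topspace X" "f x0 = y" "\<phi> x0 = fmax X Y f \<phi> y"
      using fmax_attain(1)[OF CX_cont[OF \<phi>] True] by blast
    show ?thesis using True x0 fmax_attain(2)[OF CX_cont[OF \<phi>] True] t
      by (subst fmax_eqI[of _ _ x0]) (auto intro: mult_left_mono)
  qed (simp add: fmax_def)
qed

lemma fmax_pull:
  assumes \<psi>: "\<psi> \<in> CX Y"
  shows "fmax X Y f (extX X (\<lambda>x. \<psi> (f x))) = \<psi>"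
proof
  fix y
  show "fmax X Y f (extX X (\<lambda>x. \<psi> (f x))) y = \<psi> y"
  proof (cases "y \<in> topspace Y")
    case True
    then have "y \<in> f ` topspace X" using sf by simp
    then obtain x0 where "x0 \<in> topspace X" "f x0 = y" by blast
    then show ?thesis using True
      by (subst fmax_eqI[of _ _ x0]) (auto simp: extX_def)
  qed (simp add: fmax_def CX_out[OF \<psi>])
qed


lemma neg_ext_shift: "(\<lambda>x. - extX X (\<lambda>x. \<phi> x + c) x) = extX X (\<lambda>x. (\<lambda>x. - \<phi> x) x + (- c))"
  by (auto simp: extX_def)

lemma fmin_CX: "open_map X Y f \<Longrightarrow> \<phi> \<in> CX X \<Longrightarrow> fmin X Y f \<phi> \<in> CX Y"
  unfolding fmin_def using fmax_CX[OF _ CX_cont[OF CX_minus]] CX_minus by blast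

lemma fmin_mono:
  assumes "\<phi> \<in> CX X" "\<phi>' \<in> CX X" "\<forall>x\<in>topspace X. \<phi> x \<le> \<phi>' x" "y \<in> topspace Y"
  shows "fmin X Y f \<phi> y \<le> fmin X Y f \<phi>' y"
  unfolding fmin_def using fmax_mono[OF CX_cont[OF CX_minus[OF assms(2)]] CX_cont[OF CX_minus[OF assms(1)]] _ assms(4)] assms(3)
  by auto

lemma fmin_shift:
  assumes \<phi>: "\<phi> \<in> CX X"
  shows "fmin X Y f (extX X (\<lambda>x. \<phi> x + c)) = extX Y (\<lambda>y. fmin X Y f \<phi> y + c)"
  unfolding fmin_def neg_ext_shift fmax_shift[OF CX_minus[OF \<phi>]]
  by (auto simp: extX_def)

lemma fmin_homog:
  assumes \<phi>: "\<phi> \<in> CX X" and t: "t \<ge> 0"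
  shows "fmin X Y f (\<lambda>x. t * \<phi> x) = (\<lambda>y. t * fmin X Y f \<phi> y)"
proof -
  have "(\<lambda>x. - (t * \<phi> x)) = (\<lambda>x. t * (- \<phi> x))" by auto
  then show ?thesis unfolding fmin_def using fmax_homog[OF CX_minus[OF \<phi>] t] by simp
qed

lemma fmin_pull:
  assumes \<psi>: "\<psi> \<in> CX Y"
  shows "fmin X Y f (extX X (\<lambda>x. \<psi> (f x))) = \<psi>"
proof -
  have "(\<lambda>x. - extX X (\<lambda>x. \<psi> (f x)) x) = extX X (\<lambda>x. (\<lambda>y. - \<psi> y) (f x))"
    by (auto simp: extX_def)
  then show ?thesis unfolding fmin_def using fmax_pull[OF CX_minus[OF \<psi>]] by simp
qed

lemma fmin_le: "continuous_map X euclideanreal \<phi> \<Longrightarrow> x \<in> topspace X \<Longrightarrow> fmin X Y f \<phi> (f x) \<le> \<phi> x"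
  unfolding fmin_def using fmax_ge[of "\<lambda>x. - \<phi> x" x] by (auto intro: continuous_intros)

lemma pull_CX: "\<psi> \<in> CX Y \<Longrightarrow> extX X (\<lambda>x. \<psi> (f x)) \<in> CX X"
  by (intro CX_extX continuous_map_compose[OF cf, unfolded o_def] CX_cont)

lemma OHmap_OH:
  assumes cY: "compact_space Y" and \<nu>: "\<nu> \<in> OH X"
  shows "OHmap X Y f \<nu> \<in> OH Y"
proof (rule OH_intro[OF cY])
  have fY: "x \<in> topspace X \<Longrightarrow> f x \<in> topspace Y" for x using sf by blast
  show "OHmap X Y f \<nu> \<in> extensional (CX Y)" by (simp add: OHmap_def)
  have "extX X (\<lambda>x. extX Y (\<lambda>_. 1) (f x)) = extX X (\<lambda>_. 1)"
    by (rule extX_cong) (simp add: extX_in fY)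
  then show "OHmap X Y f \<nu> (extX Y (\<lambda>_. 1)) = 1"
    using OH_props(1)[OF \<nu>] CX_extX[of Y "\<lambda>_. 1"] by (simp add: OHmap_def)
  fix \<phi> \<psi> :: "'b \<Rightarrow> real" and c t :: real
  assume \<phi>: "\<phi> \<in> CX Y"
  have e1: "extX X (\<lambda>x. extX Y (\<lambda>y. \<phi> y + c) (f x)) = extX X (\<lambda>x. extX X (\<lambda>x. \<phi> (f x)) x + c)"
    by (rule extX_cong) (simp add: extX_in fY)
  show "OHmap X Y f \<nu> (extX Y (\<lambda>x. \<phi> x + c)) = OHmap X Y f \<nu> \<phi> + c"
    using CX_shift[OF \<phi>, of c] \<phi> OH_props(2)[OF \<nu> pull_CX[OF \<phi>]]
    by (simp add: OHmap_def e1)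
  {
    assume \<psi>: "\<psi> \<in> CX Y" and le: "\<forall>x\<in>topspace Y. \<phi> x \<le> \<psi> x"
    have "\<nu> (extX X (\<lambda>x. \<phi> (f x))) \<le> \<nu> (extX X (\<lambda>x. \<psi> (f x)))"
      using le fY by (intro OH_props(3)[OF \<nu> pull_CX[OF \<phi>] pull_CX[OF \<psi>]]) (auto simp: extX_def)
    then show "OHmap X Y f \<nu> \<phi> \<le> OHmap X Y f \<nu> \<psi>" using \<phi> \<psi> by (simp add: OHmap_def)
  }
  {
    assume t: "t \<ge> 0"
    have e2: "extX X (\<lambda>x. t * \<phi> (f x)) = (\<lambda>x. t * extX X (\<lambda>x. \<phi> (f x)) x)"
      by (auto simp: extX_def)
    show "OHmap X Y f \<nu> (\<lambda>x. t * \<phi> x) = t * OHmap X Y f \<nu> \<phi>"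
      using CX_mult[OF \<phi>, of t] \<phi> OH_props(4)[OF \<nu> pull_CX[OF \<phi>] t]
      by (simp add: OHmap_def e2)
  }
qed


lemma sec_OH:
  assumes om: "open_map X Y f" and \<mu>: "\<mu> \<in> OH Y" and \<nu>0: "\<nu>0 \<in> OH X"
  shows "sec X Y f \<nu>0 \<mu> \<in> OH X"
proof (rule OH_intro[OF cX])
  let ?M = "fmax X Y f" and ?m = "fmin X Y f"
  show "sec X Y f \<nu>0 \<mu> \<in> extensional (CX X)" by (simp add: sec_def)
  have one: "extX X (\<lambda>_. 1) \<in> CX X" by (rule CX_extX) simp
  have fY: "x \<in> topspace X \<Longrightarrow> f x \<in> topspace Y" for x using sf by blast
  have e: "extX X (\<lambda>_. 1) = extX X (\<lambda>x. extX Y (\<lambda>_. 1) (f x))"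
    by (rule extX_cong) (simp add: extX_in fY)
  have c1: "extX Y (\<lambda>_. 1) \<in> CX Y" by (rule CX_extX) simp
  have "?M (extX X (\<lambda>_. 1)) = extX Y (\<lambda>_. 1)" "?m (extX X (\<lambda>_. 1)) = extX Y (\<lambda>_. 1)"
    using fmax_pull[OF c1] fmin_pull[OF c1] e by simp_all
  then show "sec X Y f \<nu>0 \<mu> (extX X (\<lambda>_. 1)) = 1"
    using one OH_props(1)[OF \<nu>0] OH_props(1)[OF \<mu>] by (simp add: sec_def)
  fix \<phi> \<psi> :: "'a \<Rightarrow> real" and c t :: real
  assume \<phi>: "\<phi> \<in> CX X"
  show "sec X Y f \<nu>0 \<mu> (extX X (\<lambda>x. \<phi> x + c)) = sec X Y f \<nu>0 \<mu> \<phi> + c"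
    using \<phi> CX_shift[OF \<phi>] fmax_shift[OF \<phi>] fmin_shift[OF \<phi>]
      OH_props(2)[OF \<nu>0 \<phi>] OH_props(2)[OF \<mu> fmax_CX[OF om CX_cont[OF \<phi>]]]
      OH_props(2)[OF \<mu> fmin_CX[OF om \<phi>]]
    by (simp add: sec_def max_def min_def)
  {
    assume \<psi>: "\<psi> \<in> CX X" and le: "\<forall>x\<in>topspace X. \<phi> x \<le> \<psi> x"
    have "\<mu> (?M \<phi>) \<le> \<mu> (?M \<psi>)"
      using fmax_mono[OF CX_cont[OF \<phi>] CX_cont[OF \<psi>] le]
      by (intro OH_props(3)[OF \<mu> fmax_CX[OF om CX_cont[OF \<phi>]] fmax_CX[OF om CX_cont[OF \<psi>]]]) auto
    moreover have "\<mu> (?m \<phi>) \<le> \<mu> (?m \<psi>)"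
      using fmin_mono[OF \<phi> \<psi> le]
      by (intro OH_props(3)[OF \<mu> fmin_CX[OF om \<phi>] fmin_CX[OF om \<psi>]]) auto
    moreover have "\<nu>0 \<phi> \<le> \<nu>0 \<psi>" using OH_props(3)[OF \<nu>0 \<phi> \<psi> le] .
    ultimately show "sec X Y f \<nu>0 \<mu> \<phi> \<le> sec X Y f \<nu>0 \<mu> \<psi>"
      using \<phi> \<psi> by (simp add: sec_def max_def min_def)
  }
  {
    assume t: "t \<ge> 0"
    have "max (min (t * a) (t * b)) (t * d) = t * max (min a b) d" for a b d :: real
      using t by (simp add: min_mult_distrib_left max_mult_distrib_left)
    then show "sec X Y f \<nu>0 \<mu> (\<lambda>x. t * \<phi> x) = t * sec X Y f \<nu>0 \<mu> \<phi>"
      using \<phi> CX_mult[OF \<phi>, of t] fmax_homog[OF \<phi> t] fmin_homog[OF \<phi> t]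
        OH_props(4)[OF \<nu>0 \<phi> t] OH_props(4)[OF \<mu> fmax_CX[OF om CX_cont[OF \<phi>]] t]
        OH_props(4)[OF \<mu> fmin_CX[OF om \<phi>] t]
      by (simp add: sec_def)
  }
qed

lemma sec_push:
  assumes \<mu>: "\<mu> \<in> OH Y"
  shows "OHmap X Y f (sec X Y f \<nu>0 \<mu>) = \<mu>"
proof
  fix \<psi>
  show "OHmap X Y f (sec X Y f \<nu>0 \<mu>) \<psi> = \<mu> \<psi>"
  proof (cases "\<psi> \<in> CX Y")
    case True
    then show ?thesis using pull_CX[OF True] fmax_pull[OF True] fmin_pull[OF True]
      by (simp add: OHmap_def sec_def)
  next
    case False
    then show ?thesis using OH_props(5)[OF \<mu>] by (simp add: OHmap_def extensional_def)
  qed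
qed

lemma sec_base:
  assumes om: "open_map X Y f" and \<nu>0: "\<nu>0 \<in> OH X"
  shows "sec X Y f \<nu>0 (OHmap X Y f \<nu>0) = \<nu>0"
proof
  fix \<phi>
  show "sec X Y f \<nu>0 (OHmap X Y f \<nu>0) \<phi> = \<nu>0 \<phi>"
  proof (cases "\<phi> \<in> CX X")
    case True
    have fY: "x \<in> topspace X \<Longrightarrow> f x \<in> topspace Y" for x using sf by blast
    have a: "\<nu>0 \<phi> \<le> \<nu>0 (extX X (\<lambda>x. fmax X Y f \<phi> (f x)))"
      using fmax_ge[OF CX_cont[OF True]]
      by (intro OH_props(3)[OF \<nu>0 True pull_CX[OF fmax_CX[OF om CX_cont[OF True]]]]) (auto simp: extX_def)
    have b: "\<nu>0 (extX X (\<lambda>x. fmin X Y f \<phi> (f x))) \<le> \<nu>0 \<phi>"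
      using fmin_le[OF CX_cont[OF True]]
      by (intro OH_props(3)[OF \<nu>0 pull_CX[OF fmin_CX[OF om True]] True]) (auto simp: extX_def)
    show ?thesis using True a b fmax_CX[OF om CX_cont[OF True]] fmin_CX[OF om True]
      by (simp add: OHmap_def sec_def)
  next
    case False
    then show ?thesis using OH_props(5)[OF \<nu>0] by (simp add: sec_def extensional_def)
  qed
qed

lemma sec_cont:
  assumes om: "open_map X Y f" and \<nu>0: "\<nu>0 \<in> OH X"
  shows "continuous_map (OHtop Y) (OHtop X) (sec X Y f \<nu>0)"
proof -
  have "continuous_map (OHtop Y) (product_topology (\<lambda>_. euclideanreal) (CX X)) (sec X Y f \<nu>0)"
  proof (subst continuous_map_componentwise, intro conjI ballI)
    show "sec X Y f \<nu>0 ` topspace (OHtop Y) \<subseteq> extensional (CX X)" by (auto simp: sec_def)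
    fix k assume k: "k \<in> CX X"
    have "continuous_map (OHtop Y) euclideanreal
           (\<lambda>\<mu>. max (min (\<nu>0 k) (\<mu> (fmax X Y f k))) (\<mu> (fmin X Y f k)))"
      using proj_cont[OF fmax_CX[OF om CX_cont[OF k]]] proj_cont[OF fmin_CX[OF om k]]
      by (intro continuous_intros) auto
    then show "continuous_map (OHtop Y) euclideanreal (\<lambda>\<mu>. sec X Y f \<nu>0 \<mu> k)"
      using k by (simp add: sec_def)
  qed
  moreover have "sec X Y f \<nu>0 \<in> topspace (OHtop Y) \<rightarrow> OH X"
    using sec_OH[OF om _ \<nu>0] by auto
  ultimately show ?thesis unfolding OHtop_def[of X]
    by (simp add: continuous_map_in_subtopology)
qed

lemma OHmap_dirac:
  assumes "x \<in> topspace X"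
  shows "OHmap X Y f (dirac X x) = dirac Y (f x)"
proof
  fix \<psi>
  show "OHmap X Y f (dirac X x) \<psi> = dirac Y (f x) \<psi>"
    using assms pull_CX[of \<psi>] by (auto simp: OHmap_def dirac_def extX_def)
qed

end


theorem proposition1:
  fixes X :: "'a topology" and Y :: "'b topology" and f :: "'a \<Rightarrow> 'b"
  assumes "compact_space X" and "Hausdorff_space X"
    and "compact_space Y" and "Hausdorff_space Y"
    and "continuous_map X Y f" and "f ` topspace X = topspace Y"
  shows "open_map (OHtop X) (OHtop Y) (OHmap X Y f) \<longleftrightarrow> open_map X Y f"
proof
  note cX = assms(1) and hX = assms(2) and cY = assms(3) and hY = assms(4) and cf = assms(5) and sf = assms(6)
  have fY: "z \<in> topspace X \<Longrightarrow> f z \<in> topspace Y" for z using sf by blast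
  have nX: "normal_space X" using cX hX compact_Hausdorff_or_regular_imp_normal_space by blast
  have nY: "normal_space Y" using cY hY compact_Hausdorff_or_regular_imp_normal_space by blast
  assume oh: "open_map (OHtop X) (OHtop Y) (OHmap X Y f)"
  show "open_map X Y f"
    unfolding open_map_def
  proof (intro allI impI)
    fix U assume U: "openin X U"
    show "openin Y (f ` U)"
      unfolding openin_subopen[of Y "f ` U"]
    proof
      fix y0 assume "y0 \<in> f ` U"
      then obtain x where x: "x \<in> U" "y0 = f x" by auto
      have xX: "x \<in> topspace X" using x U openin_subset by blast
      have c1: "closedin X (topspace X - U)" by (intro closedin_diff closedin_topspace U)
      have c2: "closedin X {x}" using hX xX by (simp add: Hausdorff_imp_t1_space closedin_t1_singleton)
      have dj: "disjnt (topspace X - U) {x}" using x by (simp add: disjnt_def)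
      obtain \<phi> where \<phi>: "continuous_map X (top_of_set {0..1::real}) \<phi>" "\<phi> ` (topspace X - U) \<subseteq> {0}" "\<phi> ` {x} \<subseteq> {1}"
        by (rule Urysohn_lemma[OF nX c1 c2 dj, of 0 1]) auto
      have \<phi>c: "continuous_map X euclideanreal \<phi>" and \<phi>r: "\<And>z. z \<in> topspace X \<Longrightarrow> 0 \<le> \<phi> z \<and> \<phi> z \<le> 1"
        using \<phi>(1) by (auto simp: continuous_map_in_subtopology Pi_iff)
      define \<phi>' where "\<phi>' = extX X \<phi>"
      have \<phi>'C: "\<phi>' \<in> CX X" unfolding \<phi>'_def by (rule CX_extX[OF \<phi>c])
      define W where "W = {\<nu> \<in> topspace (OHtop X). \<nu> \<phi>' \<in> {1/2<..}}"
      have "openin euclideanreal {1/2::real<..}" by simp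
      then have Wo: "openin (OHtop X) W" unfolding W_def
        by (rule openin_continuous_map_preimage[OF proj_cont[OF \<phi>'C]])
      then have OW: "openin (OHtop Y) (OHmap X Y f ` W)" using oh unfolding open_map_def by blast
      define G where "G = {y \<in> topspace Y. dirac Y y \<in> OHmap X Y f ` W}"
      have Go: "openin Y G" unfolding G_def
        by (rule openin_continuous_map_preimage[OF dirac_cont[OF cY] OW])
      have "dirac X x \<in> W"
        using dirac_OH[OF cX xX] xX \<phi>'C \<phi>(3) by (auto simp: W_def dirac_def \<phi>'_def extX_in)
      then have "dirac Y y0 \<in> OHmap X Y f ` W"
        using x OHmap_dirac[OF cX hY cf sf xX] by (metis image_eqI)
      then have y0G: "y0 \<in> G"
        unfolding G_def using x fY[OF xX] by simp
      have "G \<subseteq> f ` U"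
      proof
        fix y assume yG: "y \<in> G"
        then have yY: "y \<in> topspace Y" by (simp add: G_def)
        from yG obtain \<nu> where \<nu>: "\<nu> \<in> W" "dirac Y y = OHmap X Y f \<nu>" by (auto simp: G_def)
        have \<nu>OH: "\<nu> \<in> OH X" and \<nu>g: "\<nu> \<phi>' > 1/2" using \<nu> by (auto simp: W_def)
        show "y \<in> f ` U"
        proof (rule ccontr)
          assume nU: "y \<notin> f ` U"
          define K where "K = {z \<in> topspace X. \<phi> z \<ge> 1/4}"
          have Kc: "closedin X K" unfolding K_def
            using \<phi>c continuous_map_upper_lower_semicontinuous_le by blast
          have KU: "K \<subseteq> U"
          proof
            fix z assume z: "z \<in> K"
            show "z \<in> U"
            proof (rule ccontr)
              assume "z \<notin> U"
              then have "\<phi> z = 0" using \<phi>(2) z by (auto simp: K_def)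
              then show False using z by (simp add: K_def)
            qed
          qed
          have "compactin X K" using cX Kc closedin_compact_space by blast
          then have "compactin Y (f ` K)" using cf image_compactin by blast
          then have fKc: "closedin Y (f ` K)" using hY compactin_imp_closedin by blast
          have cy: "closedin Y {y}" using hY yY by (simp add: Hausdorff_imp_t1_space closedin_t1_singleton)
          have dj2: "disjnt {y} (f ` K)" using nU KU by (auto simp: disjnt_def)
          obtain \<psi> where \<psi>: "continuous_map Y (top_of_set {0..1::real}) \<psi>" "\<psi> ` {y} \<subseteq> {0}" "\<psi> ` (f ` K) \<subseteq> {1}"
            by (rule Urysohn_lemma[OF nY cy fKc dj2, of 0 1]) auto
          have \<psi>c: "continuous_map Y euclideanreal \<psi>" and \<psi>r: "\<And>z. z \<in> topspace Y \<Longrightarrow> 0 \<le> \<psi> z \<and> \<psi> z \<le> 1"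
            using \<psi>(1) by (auto simp: continuous_map_in_subtopology Pi_iff)
          define \<psi>' where "\<psi>' = extX Y \<psi>"
          have \<psi>'C: "\<psi>' \<in> CX Y" unfolding \<psi>'_def by (rule CX_extX[OF \<psi>c])
          define g where "g = extX X (\<lambda>z. \<psi>' (f z))"
          have gC: "g \<in> CX X" unfolding g_def by (rule pull_CX[OF cX hY cf sf \<psi>'C])
          have "OHmap X Y f \<nu> \<psi>' = \<psi> y"
            using \<nu>(2)[symmetric] \<psi>'C yY by (simp add: dirac_def \<psi>'_def extX_in)
          then have ng: "\<nu> g = 0" using \<psi>'C \<psi>(2) by (simp add: OHmap_def g_def)
          have "\<nu> \<phi>' \<le> \<nu> (extX X (\<lambda>z. g z + 1/4))"
          proof (rule OH_props(3)[OF \<nu>OH \<phi>'C CX_shift[OF gC]], intro ballI)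
            fix z assume z: "z \<in> topspace X"
            have gz: "g z = \<psi> (f z)" using z fY[OF z] by (simp add: g_def \<psi>'_def extX_in)
            show "\<phi>' z \<le> extX X (\<lambda>z. g z + 1/4) z"
            proof (cases "\<phi> z \<ge> 1/4")
              case True
              then have "z \<in> K" using z by (simp add: K_def)
              then have "\<psi> (f z) = 1" using \<psi>(3) by auto
              then show ?thesis using z gz \<phi>r[OF z] by (simp add: \<phi>'_def extX_in)
            next
              case False
              then show ?thesis using z gz \<psi>r[OF fY[OF z]] by (simp add: \<phi>'_def extX_in)
            qed
          qed
          also have "\<dots> = 1/4" using OH_props(2)[OF \<nu>OH gC] ng by simp
          finally show False using \<nu>g by simp
        qed
      qed
      then show "\<exists>T. openin Y T \<and> y0 \<in> T \<and> T \<subseteq> f ` U" using Go y0G by blast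
    qed
  qed
next
  note cX = assms(1) and hX = assms(2) and cY = assms(3) and hY = assms(4) and cf = assms(5) and sf = assms(6)
  assume om: "open_map X Y f"
  show "open_map (OHtop X) (OHtop Y) (OHmap X Y f)"
    unfolding open_map_def
  proof (intro allI impI)
    fix W assume W: "openin (OHtop X) W"
    show "openin (OHtop Y) (OHmap X Y f ` W)"
      unfolding openin_subopen[of "OHtop Y" "OHmap X Y f ` W"]
    proof
      fix \<mu>0 assume "\<mu>0 \<in> OHmap X Y f ` W"
      then obtain \<nu>0 where \<nu>0: "\<nu>0 \<in> W" "\<mu>0 = OHmap X Y f \<nu>0" by auto
      have \<nu>0OH: "\<nu>0 \<in> OH X" using \<nu>0(1) openin_subset[OF W] by auto
      define T where "T = {\<mu> \<in> topspace (OHtop Y). sec X Y f \<nu>0 \<mu> \<in> W}"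
      have To: "openin (OHtop Y) T" unfolding T_def
        by (rule openin_continuous_map_preimage[OF sec_cont[OF cX hY cf sf om \<nu>0OH] W])
      have "\<mu>0 \<in> T" unfolding T_def
        using \<nu>0 OHmap_OH[OF cX hY cf sf cY \<nu>0OH] sec_base[OF cX hY cf sf om \<nu>0OH] by simp
      moreover have "T \<subseteq> OHmap X Y f ` W"
      proof
        fix \<mu> assume "\<mu> \<in> T"
        then have "\<mu> \<in> OH Y" "sec X Y f \<nu>0 \<mu> \<in> W" by (auto simp: T_def)
        then show "\<mu> \<in> OHmap X Y f ` W"
          using sec_push[OF cX hY cf sf, of \<mu> \<nu>0] by (metis image_eqI)
      qed
      ultimately show "\<exists>T. openin (OHtop Y) T \<and> \<mu>0 \<in> T \<and> T \<subseteq> OHmap X Y f ` W"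
        using To by blast
    qed
  qed
qed

end
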